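(* Let $n\ge2$, $\beta_i>0$, $\nu_i\in[0,1]$ and $\rho_i\in[0,1]$ for $i\in\{1,\dots,n\}$, and consider the well-mixed resource–consumption system \[ \dot x=(1-x)x-x\sum_{i=1}^n y_i,\qquad \dot y_i=\beta_i\Big((1-\nu_i)(x-\rho_i)+\frac{\nu_i}{n-1}\sum_{j\ne i}(y_j-y_i)\Big),\quad i=1,\dots,n . \] Assume that it is not the case that all $\nu_i=1$, not the case that all $\nu_i=0$, not the case that all $\rho_i=1$, and not the case that all $\rho_i=0$. Then, provided at most one of $\nu_1,\dots,\nu_n$ equals $0$ (i.e. at least $n-1$ consumers have $\nu_i>0$), the system has a unique equilibrium $(\bar x,\bar y_1,\dots,\bar y_n)$ satisfying $\bar x=1-\sum_{i=1}^n\bar y_i$; and such an equilibrium exists (uniquely) only if at least $n-1$ of the $\nu_i$ are positive.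
   Context: An equilibrium is a point $(\bar x,\bar y_1,\dots,\bar y_n)\in\mathbb{R}^{n+1}$ at which all right-hand sides vanish. *)

theory Defs
  imports Main "HOL-Library.Cardinality" Complex_Main
begin

text \<open>Consumers are indexed by a finite type 'n with n = CARD('n).
  Right-hand side of the resource equation.\<close>
definition rc_rhs_x :: "real \<Rightarrow> ('n::finite \<Rightarrow> real) \<Rightarrow> real" where
  "rc_rhs_x x y = (1 - x) * x - x * (\<Sum>i\<in>UNIV. y i)"

definition rc_rhs_y :: "('n::finite \<Rightarrow> real) \<Rightarrow> ('n \<Rightarrow> real) \<Rightarrow> ('n \<Rightarrow> real)
    \<Rightarrow> real \<Rightarrow> ('n \<Rightarrow> real) \<Rightarrow> 'n \<Rightarrow> real" where
  "rc_rhs_y \<beta> \<nu> \<rho> x y i =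
     \<beta> i * ((1 - \<nu> i) * (x - \<rho> i)
        + \<nu> i / (real CARD('n) - 1) * (\<Sum>j\<in>UNIV - {i}. (y j - y i)))"

definition rc_equilibrium :: "('n::finite \<Rightarrow> real) \<Rightarrow> ('n \<Rightarrow> real) \<Rightarrow> ('n \<Rightarrow> real)
    \<Rightarrow> real \<Rightarrow> ('n \<Rightarrow> real) \<Rightarrow> bool" where
  "rc_equilibrium \<beta> \<nu> \<rho> x y \<longleftrightarrow>
     rc_rhs_x x y = 0 \<and> (\<forall>i. rc_rhs_y \<beta> \<nu> \<rho> x y i = 0)"

end

theory Submission
  imports Defs
begin

lemma sum_minus_i:
  fixes y :: "'n::finite \<Rightarrow> real"
  shows "(\<Sum>j\<in>UNIV - {i}. (y j - y i)) = sum y UNIV - real CARD('n) * y i"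
proof -
  have "(\<Sum>j\<in>UNIV - {i}. (y j - y i)) = sum y (UNIV - {i}) - real (card (UNIV - {i} :: 'n set)) * y i"
    by (simp add: sum_subtractf)
  also have "sum y (UNIV - {i}) = sum y UNIV - y i" by (simp add: sum_diff1)
  also have "card (UNIV - {i} :: 'n set) = CARD('n) - 1" by (simp add: card_Diff_singleton)
  also have "real (CARD('n) - 1) = real CARD('n) - 1"
    using finite_UNIV_card_ge_0[where 'a='n] by (simp add: of_nat_diff)
  finally show ?thesis by (simp add: algebra_simps)
qed

lemma eq_char:
  fixes \<beta> \<nu> \<rho> y :: "'n::finite \<Rightarrow> real"
  assumes "CARD('n) \<ge> 2" "\<forall>i. \<beta> i > 0"
  shows "rc_equilibrium \<beta> \<nu> \<rho> (1 - sum y UNIV) y \<longleftrightarrow>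
    (\<forall>i. (1 - \<nu> i) * (1 - sum y UNIV - \<rho> i) * (real CARD('n) - 1)
          + \<nu> i * (sum y UNIV - real CARD('n) * y i) = 0)"
proof -
  have c: "real CARD('n) - 1 > 0" using assms(1) by simp
  have x: "rc_rhs_x (1 - sum y UNIV) y = 0" unfolding rc_rhs_x_def by (simp add: algebra_simps)
  have "rc_rhs_y \<beta> \<nu> \<rho> (1 - sum y UNIV) y i = 0 \<longleftrightarrow>
     (1 - \<nu> i) * (1 - sum y UNIV - \<rho> i) * (real CARD('n) - 1)
          + \<nu> i * (sum y UNIV - real CARD('n) * y i) = 0" for i
  proof -
    have b: "\<beta> i \<noteq> 0" using assms(2) by (metis less_irrefl)
    have "rc_rhs_y \<beta> \<nu> \<rho> (1 - sum y UNIV) y i = \<beta> i * (((1 - \<nu> i) * (1 - sum y UNIV - \<rho> i) * (real CARD('n) - 1)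
          + \<nu> i * (sum y UNIV - real CARD('n) * y i)) / (real CARD('n) - 1))"
      unfolding rc_rhs_y_def sum_minus_i using c by (simp add: field_simps)
    then show ?thesis using b c by simp
  qed
  then show ?thesis unfolding rc_equilibrium_def using x by simp
qed

lemma lin_helper:
  fixes n Y S0 a T \<nu> c :: real
  assumes "n * Y = S0 + a * T" "\<nu> * a = c * (1 - \<nu>)"
  shows "(1 - \<nu>) * T * c + \<nu> * (S0 - n * Y) = 0"
proof -
  have "\<nu> * (S0 - n * Y) = - ((\<nu> * a) * T)" using assms(1) by (simp add: algebra_simps)
  also have "\<dots> = - (c * (1 - \<nu>) * T)" using assms(2) by simp
  finally show ?thesis by (simp add: algebra_simps)
qed

theorem lemma10p4:
  fixes \<beta> \<nu> \<rho> :: "'n::finite \<Rightarrow> real"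
  assumes "CARD('n) \<ge> 2"
    and "\<forall>i. \<beta> i > 0"
    and "\<forall>i. \<nu> i \<in> {0..1}"
    and "\<forall>i. \<rho> i \<in> {0..1}"
    and "\<not> (\<forall>i. \<nu> i = 1)"
    and "\<not> (\<forall>i. \<nu> i = 0)"
    and "\<not> (\<forall>i. \<rho> i = 1)"
    and "\<not> (\<forall>i. \<rho> i = 0)"
  shows "(\<exists>!p :: real \<times> ('n \<Rightarrow> real).
             rc_equilibrium \<beta> \<nu> \<rho> (fst p) (snd p) \<and> fst p = 1 - (\<Sum>i\<in>UNIV. snd p i))
         \<longleftrightarrow> card {i. \<nu> i = 0} \<le> 1"
proof -
  define n where "n = real CARD('n)"
  define c where "c = n - 1"
  have c0: "c > 0" using assms(1) unfolding c_def n_def by simp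
  have n0: "n > 0" using c0 unfolding c_def by simp
  define Q where "Q = (\<lambda>y::'n \<Rightarrow> real. \<forall>i. (1 - \<nu> i) * (1 - sum y UNIV - \<rho> i) * c
          + \<nu> i * (sum y UNIV - n * y i) = 0)"
  define P where "P = (\<lambda>p :: real \<times> ('n \<Rightarrow> real).
             rc_equilibrium \<beta> \<nu> \<rho> (fst p) (snd p) \<and> fst p = 1 - (\<Sum>i\<in>UNIV. snd p i))"
  have PQ: "P p \<longleftrightarrow> fst p = 1 - sum (snd p) UNIV \<and> Q (snd p)" for p
    unfolding P_def Q_def c_def n_def using eq_char[OF assms(1,2)] by auto
  define a where "a = (\<lambda>i. c * (1 - \<nu> i) / \<nu> i)"
  have a_nu: "\<nu> i > 0 \<Longrightarrow> \<nu> i * a i = c * (1 - \<nu> i)" for i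
    unfolding a_def by simp
  have solve: "n * y i = sum y UNIV + a i * (1 - sum y UNIV - \<rho> i)"
    if "Q y" "\<nu> i > 0" for y i
  proof -
    have e: "(1 - \<nu> i) * (1 - sum y UNIV - \<rho> i) * c + \<nu> i * (sum y UNIV - n * y i) = 0"
      using that(1) unfolding Q_def by blast
    have "\<nu> i * (n * y i) = \<nu> i * (sum y UNIV + a i * (1 - sum y UNIV - \<rho> i))"
    proof -
      have "\<nu> i * (sum y UNIV + a i * (1 - sum y UNIV - \<rho> i))
          = \<nu> i * sum y UNIV + (\<nu> i * a i) * (1 - sum y UNIV - \<rho> i)" by (simp add: algebra_simps)
      also have "\<dots> = \<nu> i * sum y UNIV + c * (1 - \<nu> i) * (1 - sum y UNIV - \<rho> i)"
        using a_nu[OF that(2)] by simp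
      finally show ?thesis using e by (simp add: algebra_simps)
    qed
    then show ?thesis using that(2) by simp
  qed
  have main: "(\<exists>!p. P p) \<longleftrightarrow> card {i. \<nu> i = 0} \<le> 1"
  proof
    assume ex: "\<exists>!p. P p"
    show "card {i. \<nu> i = 0} \<le> 1"
    proof (rule ccontr)
      assume "\<not> card {i. \<nu> i = 0} \<le> 1"
      then obtain i k where ik: "\<nu> i = 0" "\<nu> k = 0" "i \<noteq> k"
        using card_le_Suc0_iff_eq[of "{i. \<nu> i = 0}"] by auto
      from ex obtain p where p: "P p" by blast
      define y where "y = snd p"
      define d where "d = (\<lambda>j. (if j = i then 1 else 0) - (if j = k then 1 else (0::real)))"
      define y' where "y' = (\<lambda>j. y j + d j)"
      have sd: "sum d UNIV = 0" unfolding d_def by (simp add: sum_subtractf)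
      have sy: "sum y' UNIV = sum y UNIV" unfolding y'_def using sd by (simp add: sum.distrib)
      have Qy: "Q y" using p PQ y_def by auto
      have "Q y'" unfolding Q_def
      proof
        fix j
        show "(1 - \<nu> j) * (1 - sum y' UNIV - \<rho> j) * c + \<nu> j * (sum y' UNIV - n * y' j) = 0"
        proof (cases "j = i \<or> j = k")
          case True
          then have "\<nu> j = 0" using ik by auto
          then show ?thesis using Qy sy unfolding Q_def by (metis mult_zero_left add_0_right)
        next
          case False
          then have "y' j = y j" unfolding y'_def d_def by simp
          then show ?thesis using Qy sy unfolding Q_def by metis
        qed
      qed
      then have "P (1 - sum y' UNIV, y')" using PQ by simp
      moreover have "(1 - sum y' UNIV, y') \<noteq> p"
      proof
        assume "(1 - sum y' UNIV, y') = p"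
        then have "y' = y" unfolding y_def by auto
        then have "y' i = y i" by simp
        then show False unfolding y'_def d_def using ik(3) by simp
      qed
      ultimately show False using ex p by blast
    qed
  next
    assume card: "card {i. \<nu> i = 0} \<le> 1"
    have nu0: "\<nu> i \<ge> 0" for i using assms(3) by auto
    have "{i. \<nu> i = 0} = {} \<or> (\<exists>k. {i. \<nu> i = 0} = {k})"
      using card by (metis card_0_eq card_1_singletonE finite le_Suc_eq le_zero_eq One_nat_def)
    then show "\<exists>!p. P p"
    proof
      assume E: "{i. \<nu> i = 0} = {}"
      have pos: "\<nu> i > 0" for i using E nu0[of i] by (metis empty_iff mem_Collect_eq order_le_less)
      define A where "A = sum a UNIV"
      have a0: "a i \<ge> 0" for i using pos[of i] assms(3) c0 unfolding a_def by auto
      obtain i0 where "\<nu> i0 \<noteq> 1" using assms(5) by blast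
      then have "\<nu> i0 < 1" using assms(3)[rule_format, of i0] by auto
      then have "a i0 > 0" using pos[of i0] c0 unfolding a_def by simp
      then have A0: "A > 0" unfolding A_def using a0
        by (metis UNIV_I finite sum_pos2)
      define S0 where "S0 = (\<Sum>i\<in>UNIV. a i * (1 - \<rho> i)) / A"
      define yf where "yf = (\<lambda>i. (S0 + a i * (1 - S0 - \<rho> i)) / n)"
      have key: "(\<Sum>i\<in>UNIV. a i * (1 - S - \<rho> i)) = (\<Sum>i\<in>UNIV. a i * (1 - \<rho> i)) - S * A" for S
      proof -
        have "(\<Sum>i\<in>UNIV. a i * (1 - S - \<rho> i)) = (\<Sum>i\<in>UNIV. a i * (1 - \<rho> i) - S * a i)"
          by (rule sum.cong) (auto simp: algebra_simps)
        also have "\<dots> = (\<Sum>i\<in>UNIV. a i * (1 - \<rho> i)) - S * A"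
          unfolding A_def by (simp add: sum_subtractf sum_distrib_left)
        finally show ?thesis .
      qed
      have k0: "(\<Sum>i\<in>UNIV. a i * (1 - S0 - \<rho> i)) = 0"
        unfolding key S0_def using A0 by simp
      have syf: "sum yf UNIV = S0"
      proof -
        have "sum yf UNIV = (\<Sum>i\<in>UNIV. S0 + a i * (1 - S0 - \<rho> i)) / n"
          unfolding yf_def by (simp add: sum_divide_distrib)
        also have "\<dots> = (n * S0 + (\<Sum>i\<in>UNIV. a i * (1 - S0 - \<rho> i))) / n"
          by (simp add: sum.distrib n_def)
        finally show ?thesis using k0 n0 by simp
      qed
      show "\<exists>!p. P p"
      proof (rule ex1I[of _ "(1 - S0, yf)"])
        have "Q yf" unfolding Q_def syf
        proof
          fix i
          have "n * yf i = S0 + a i * (1 - S0 - \<rho> i)" unfolding yf_def using n0 by simp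
          then show "(1 - \<nu> i) * (1 - S0 - \<rho> i) * c + \<nu> i * (S0 - n * yf i) = 0"
            using a_nu[OF pos[of i]] lin_helper by blast
        qed
        then show "P (1 - S0, yf)" using PQ syf by simp
      next
        fix p assume "P p"
        then have fp: "fst p = 1 - sum (snd p) UNIV" and Qp: "Q (snd p)" using PQ by auto
        define y where "y = snd p"
        define S where "S = sum y UNIV"
        have ny: "n * y i = S + a i * (1 - S - \<rho> i)" for i
          using solve[OF Qp pos] unfolding y_def S_def .
        have "n * S = (\<Sum>i\<in>UNIV. n * y i)" unfolding S_def by (simp add: sum_distrib_left)
        also have "\<dots> = (\<Sum>i\<in>UNIV. S + a i * (1 - S - \<rho> i))" using ny by simp
        also have "\<dots> = n * S + ((\<Sum>i\<in>UNIV. a i * (1 - \<rho> i)) - S * A)"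
          by (simp add: sum.distrib n_def key)
        finally have "S * A = (\<Sum>i\<in>UNIV. a i * (1 - \<rho> i))" by simp
        then have SS: "S = S0" unfolding S0_def using A0 by (simp add: field_simps)
        have "y = yf"
        proof
          fix i show "y i = yf i" using ny[of i] n0 unfolding yf_def SS by (simp add: field_simps)
        qed
        then show "p = (1 - S0, yf)" using fp SS unfolding y_def S_def
          by (metis prod.collapse)
      qed
    next
      assume "\<exists>k. {i. \<nu> i = 0} = {k}"
      then obtain k where K: "{i. \<nu> i = 0} = {k}" by blast
      have nk: "\<nu> k = 0" using K by auto
      have pos: "i \<noteq> k \<Longrightarrow> \<nu> i > 0" for i using K nu0[of i] by (metis mem_Collect_eq order_le_less singletonD)
      define S0 where "S0 = 1 - \<rho> k"
      define yf where "yf = (\<lambda>i. (S0 + a i * (1 - S0 - \<rho> i)) / n)"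
      define y0 where "y0 = yf(k := S0 - (\<Sum>j\<in>UNIV - {k}. yf j))"
      have s0: "sum y0 UNIV = S0"
      proof -
        have "sum y0 UNIV = y0 k + sum y0 (UNIV - {k})" by (simp add: sum.remove)
        also have "sum y0 (UNIV - {k}) = sum yf (UNIV - {k})"
          unfolding y0_def by (rule sum.cong) auto
        finally show ?thesis unfolding y0_def by simp
      qed
      show "\<exists>!p. P p"
      proof (rule ex1I[of _ "(1 - S0, y0)"])
        have "Q y0" unfolding Q_def s0
        proof
          fix i
          show "(1 - \<nu> i) * (1 - S0 - \<rho> i) * c + \<nu> i * (S0 - n * y0 i) = 0"
          proof (cases "i = k")
            case True then show ?thesis using nk unfolding S0_def by simp
          next
            case False
            have "n * y0 i = S0 + a i * (1 - S0 - \<rho> i)" unfolding y0_def yf_def using n0 False by simp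
            then show ?thesis using a_nu[OF pos[OF False]] lin_helper by blast
          qed
        qed
        then show "P (1 - S0, y0)" using PQ s0 by simp
      next
        fix p assume "P p"
        then have fp: "fst p = 1 - sum (snd p) UNIV" and Qp: "Q (snd p)" using PQ by auto
        define y where "y = snd p"
        define S where "S = sum y UNIV"
        have "(1 - \<nu> k) * (1 - S - \<rho> k) * c + \<nu> k * (S - n * y k) = 0"
          using Qp unfolding Q_def y_def S_def by blast
        then have SS: "S = S0" using nk c0 unfolding S0_def by simp
        have ny: "i \<noteq> k \<Longrightarrow> y i = yf i" for i
          using solve[OF Qp pos, of i] n0 unfolding yf_def y_def[symmetric] S_def[symmetric] SS
          by (simp add: field_simps)
        have "S = y k + sum y (UNIV - {k})" unfolding S_def by (simp add: sum.remove)
        also have "sum y (UNIV - {k}) = sum yf (UNIV - {k})" by (rule sum.cong) (auto simp: ny)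
        finally have "y k = y0 k" unfolding y0_def SS by simp
        then have "y = y0" using ny unfolding y0_def by (auto intro!: ext)
        then show "p = (1 - S0, y0)" using fp SS unfolding y_def S_def
          by (metis prod.collapse)
      qed
    qed
  qed
  then show ?thesis unfolding P_def .
qed

end
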